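(* Let $P=\sum_{i=1}^nx^i\,dx^i\otimes\partial_{x^i}$, i.e. $P=\mathrm{diag}\{x^1,\dots,x^n\}$, on $\mathbb R^n$; it is a Nijenhuis operator on the tangent Lie algebroid $(T_{\mathbb R^n},[-,-],\mathrm{id})$. Then the Frölicher–Nijenhuis cohomology of $P$ vanishes in all degrees: $\mathrm H^k_{\mathrm{FN}}(T_{\mathbb R^n})=0$ for all $k\ge0$, i.e. the complex $(\Omega^\bullet(\mathbb R^n,T_{\mathbb R^n}),d_{\mathrm{FN}}=[P,-]_{\mathrm{FN}})$ is exact.
   Context: $\Omega^k(\mathbb R^n,T_{\mathbb R^n})=\Gamma(\wedge^kT^\vee_{\mathbb R^n}\otimes T_{\mathbb R^n})$ is the space of vector-valued $k$-forms. The Frölicher–Nijenhuis bracket is the $\mathbb R$-bilinear bracket given on $K=\alpha\otimes X$ ($\alpha$ a $k$-form, $X$ a vector field) and $L=\beta\otimes Y$ ($\beta$ an $l$-form) by $[K,L]_{\mathrm{FN}}=\alpha\wedge\beta\otimes[X,Y]+\alpha\wedge\mathcal L_X\beta\otimes Y-\mathcal L_Y\alpha\wedge\beta\otimes X+(-1)^kd\alpha\wedge i_X\beta\otimes Y+(-1)^ki_Y\alpha\wedge d\beta\otimes X$, where $d$ is the de Rham differential, $i_X$ contraction and $\mathcal L_X=i_Xd+di_X$ the Lie derivative. For a Nijenhuis operator $P$ (i.e. $[P,P]_{\mathrm{FN}}=0$), $d_{\mathrm{FN}}=[P,-]_{\mathrm{FN}}$ is a differential of degree $1$ and $\mathrm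 H^\bullet_{\mathrm{FN}}(T_{\mathbb R^n})$ denotes its cohomology. *)

theory Defs
  imports "HOL-Analysis.Analysis" "HOL-Combinatorics.Permutations"
begin

text \<open>A scalar k-form is represented by its values on constant vector fields:
  w x v = w_x(v 0, ..., v (k-1)); a vector-valued k-form K gives
  K x v in real^'n (components w.r.t. the coordinate fields).\<close>

type_synonym 'n sform = "real^'n \<Rightarrow> (nat \<Rightarrow> real^'n) \<Rightarrow> real"
type_synonym 'n vform = "real^'n \<Rightarrow> (nat \<Rightarrow> real^'n) \<Rightarrow> real^'n"

coinductive smooth_fun :: "(real^('n::finite) \<Rightarrow> real) \<Rightarrow> bool" where
  "(\<forall>x. f differentiable (at x)) \<Longrightarrow>
   (\<forall>j. smooth_fun (\<lambda>x. frechet_derivative f (at x) (axis j 1))) \<Longrightarrow> smooth_fun f"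

definition vvform :: "nat \<Rightarrow> ('n::finite) vform set" where
  "vvform k = {K.
     (\<forall>x v w. (\<forall>i<k. v i = w i) \<longrightarrow> K x v = K x w) \<and>
     (\<forall>x v i. i < k \<longrightarrow> linear (\<lambda>u. K x (v(i := u)))) \<and>
     (\<forall>x v i j. i < k \<and> j < k \<and> i \<noteq> j \<and> v i = v j \<longrightarrow> K x v = 0) \<and>
     (\<forall>v j. smooth_fun (\<lambda>x. K x v $ j))}"

definition comp :: "('n::finite) vform \<Rightarrow> 'n \<Rightarrow> 'n sform" where
  "comp K j = (\<lambda>x v. K x v $ j)"

definition wedge :: "nat \<Rightarrow> nat \<Rightarrow> ('n::finite) sform \<Rightarrow> 'n sform \<Rightarrow> 'n sform" where
  "wedge k l a b = (\<lambda>x v. (1 / (fact k * fact l)) *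
     (\<Sum>\<sigma>\<in>{\<sigma>. \<sigma> permutes {..<k+l}}.
        of_int (sign \<sigma>) * a x (\<lambda>i. v (\<sigma> i)) * b x (\<lambda>i. v (\<sigma> (i + k)))))"

definition dR :: "nat \<Rightarrow> ('n::finite) sform \<Rightarrow> 'n sform" where
  "dR k w = (\<lambda>x v. \<Sum>i\<le>k. (-1)^i *
     frechet_derivative (\<lambda>y. w y (\<lambda>m. if m < i then v m else v (Suc m))) (at x) (v i))"

definition contr :: "nat \<Rightarrow> ('n::finite) \<Rightarrow> 'n sform \<Rightarrow> 'n sform" where
  "contr k j w = (if k = 0 then (\<lambda>x v. 0)
     else (\<lambda>x v. w x (\<lambda>m. if m = 0 then axis j 1 else v (m - 1))))"

definition lie :: "('n::finite) \<Rightarrow> 'n sform \<Rightarrow> 'n sform" where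
  "lie j w = (\<lambda>x v. frechet_derivative (\<lambda>y. w y v) (at x) (axis j 1))"

text \<open>Froelicher-Nijenhuis bracket of a k-form K and an l-form L, obtained by
  R-bilinear extension of the defining formula, writing
  K = sum_j K^j (x) d/dx^j, L = sum_m L^m (x) d/dx^m
  (the term with [d/dx^j, d/dx^m] vanishes).\<close>
definition FN :: "nat \<Rightarrow> nat \<Rightarrow> ('n::finite) vform \<Rightarrow> 'n vform \<Rightarrow> 'n vform" where
  "FN k l K L = (\<lambda>x v. \<Sum>j\<in>UNIV. \<Sum>m\<in>UNIV.
      wedge k l (comp K j) (lie j (comp L m)) x v *\<^sub>R axis m 1
    - wedge k l (lie m (comp K j)) (comp L m) x v *\<^sub>R axis j 1
    + ((-1)^k * wedge (k+1) (l-1) (dR k (comp K j)) (contr l j (comp L m)) x v) *\<^sub>R axis m 1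
    + ((-1)^k * wedge (k-1) (l+1) (contr k m (comp K j)) (dR l (comp L m)) x v) *\<^sub>R axis j 1)"

definition Pdiag :: "('n::finite) vform" where
  "Pdiag = (\<lambda>x v. \<chi> i. x $ i * v 0 $ i)"

end

theory Submission
  imports Defs
begin


definition cyc :: "nat \<Rightarrow> nat \<Rightarrow> nat" where
  "cyc i t = (if t = 0 then i else if t \<le> i then t - 1 else t)"
definition cycinv :: "nat \<Rightarrow> nat \<Rightarrow> nat" where
  "cycinv i s = (if s = i then 0 else if s < i then s + 1 else s)"
definition sh :: "(nat \<Rightarrow> nat) \<Rightarrow> nat \<Rightarrow> nat" where
  "sh r t = (if t = 0 then 0 else Suc (r (t - 1)))"

lemma cyc_0: "cyc 0 = id"
  by (auto simp: fun_eq_iff cyc_def)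

lemma cyc_Suc: "cyc (Suc i) = Transposition.transpose i (Suc i) \<circ> cyc i"
  by (auto simp: fun_eq_iff cyc_def Transposition.transpose_def)

lemma cyc_permutes: "i \<le> k \<Longrightarrow> cyc i permutes {..<Suc k}"
proof (induction i)
  case 0 show ?case unfolding cyc_0 by (simp only: permutes_id)
next
  case (Suc i)
  then show ?case unfolding cyc_Suc
    by (intro permutes_compose permutes_swap_id) auto
qed

lemma cyc_permutation: "permutation (cyc i)"
  using cyc_permutes[of i i] permutation_permutes by blast

lemma sign_cyc: "sign (cyc i) = (-1)^i"
proof (induction i)
  case 0 then show ?case by (simp add: cyc_0)
next
  case (Suc i)
  have "sign (cyc (Suc i)) = sign (Transposition.transpose i (Suc i)) * sign (cyc i)"
    unfolding cyc_Suc by (rule sign_compose) (auto simp: cyc_permutation permutation_swap_id)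
  then show ?case using Suc by (simp add: sign_swap_id)
qed

lemma cyc_cycinv: "cyc i (cycinv i s) = s" "cycinv i (cyc i t) = t"
  by (auto simp: cyc_def cycinv_def)

lemma sh_id: "sh id = id"
  by (auto simp: fun_eq_iff sh_def)

lemma sh_swap: "sh (Transposition.transpose a b \<circ> r) = Transposition.transpose (Suc a) (Suc b) \<circ> sh r"
  by (auto simp: fun_eq_iff sh_def Transposition.transpose_def)

lemma sh_perm: assumes "r permutes {..<k}" shows "sh r permutes {..<Suc k} \<and> sign (sh r) = sign r"
  using assms finite_lessThan[of k]
proof (induction rule: permutes_induct)
  case id show ?case unfolding sh_id by (simp only: permutes_id sign_id)
next
  case (swap a b p)
  have pp: "permutation (sh p)" "permutation p"
    using swap permutation_permutes by blast+
  have "sign (sh (Transposition.transpose a b \<circ> p)) = sign (Transposition.transpose (Suc a) (Suc b)) * sign (sh p)"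
    unfolding sh_swap by (rule sign_compose) (auto simp: pp permutation_swap_id)
  moreover have "sign (Transposition.transpose a b \<circ> p) = sign (Transposition.transpose a b) * sign p"
    by (rule sign_compose) (auto simp: pp permutation_swap_id)
  moreover have "sh (Transposition.transpose a b \<circ> p) permutes {..<Suc k}"
    unfolding sh_swap using swap by (intro permutes_compose permutes_swap_id) auto
  ultimately show ?case using swap.IH swap.hyps(3) by (simp only: sign_swap_id nat.inject if_False)
qed

lemma perm_fix0_sh:
  assumes t: "t permutes {..<Suc k}" and t0: "t 0 = 0"
  shows "\<exists>r. r permutes {..<k} \<and> t = sh r"
proof -
  define r where "r s = t (Suc s) - 1" for s
  have inj: "inj t" using permutes_inj[OF t] .
  have nz: "t (Suc s) \<noteq> 0" for s using inj t0 by (metis inj_eq nat.distinct(1))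
  have ts: "t = sh r"
  proof
    fix x show "t x = sh r x" using nz t0 by (cases x) (auto simp: sh_def r_def)
  qed
  have "r permutes {..<k}" unfolding permutes_def
  proof (intro conjI allI impI)
    fix s assume "s \<notin> {..<k}"
    then have "Suc s \<notin> {..<Suc k}" by auto
    then show "r s = s" using t by (simp add: permutes_def r_def)
  next
    fix y
    obtain x where x: "t x = Suc y" using permutes_surj[OF t] by (metis surjD)
    have "x \<noteq> 0" using x t0 by (cases x) auto
    then obtain s where s: "x = Suc s" by (cases x) auto
    show "\<exists>!x. r x = y"
    proof
      show "r s = y" using x s by (simp add: r_def)
    next
      fix s' assume "r s' = y"
      then have "t (Suc s') = Suc y" using nz[of s'] by (simp add: r_def)
      then show "s' = s" using x s inj by (metis inj_eq nat.inject)
    qed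
  qed
  with ts show ?thesis by blast
qed

lemma sum_perms_Suc:
  "sum g {s. s permutes {..<Suc k}} = (\<Sum>i\<le>k. \<Sum>r\<in>{r. r permutes {..<k}}. g (cyc i \<circ> sh r))"
proof -
  let ?f = "\<lambda>(i, r). cyc i \<circ> sh r"
  have fin: "finite {r. r permutes {..<k}}" by (simp add: finite_permutations)
  have "(\<Sum>i\<le>k. \<Sum>r\<in>{r. r permutes {..<k}}. g (cyc i \<circ> sh r))
      = (\<Sum>p\<in>{..k} \<times> {r. r permutes {..<k}}. g (?f p))"
    by (subst sum.cartesian_product) (simp add: case_prod_unfold)
  also have "\<dots> = sum g (?f ` ({..k} \<times> {r. r permutes {..<k}}))"
  proof -
  have "inj_on ?f ({..k} \<times> {r. r permutes {..<k}})"
  proof (rule inj_onI)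
    fix p q assume p: "p \<in> {..k} \<times> {r. r permutes {..<k}}" and q: "q \<in> {..k} \<times> {r. r permutes {..<k}}"
      and e: "?f p = ?f q"
    obtain i r where pi: "p = (i, r)" by (cases p)
    obtain j s where qj: "q = (j, s)" by (cases q)
    have e': "cyc i \<circ> sh r = cyc j \<circ> sh s" using e pi qj by simp
    then have "cyc i (sh r 0) = cyc j (sh s 0)" by (metis comp_apply)
    then have ij: "i = j" by (simp add: sh_def cyc_def)
    have "sh r = sh s"
    proof
      fix t have "cyc i (sh r t) = cyc i (sh s t)" using e' ij by (metis comp_apply)
      then show "sh r t = sh s t" by (metis cyc_cycinv(2))
    qed
    then have "r = s" by (metis (no_types) fun_eq_iff sh_def nat.inject diff_Suc_1 nat.distinct(1))
    then show "p = q" using pi qj ij by simp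
  qed
  then show ?thesis by (simp add: sum.reindex comp_def)
  qed
  also have "?f ` ({..k} \<times> {r. r permutes {..<k}}) = {s. s permutes {..<Suc k}}"
  proof (intro equalityI subsetI)
    fix s assume "s \<in> ?f ` ({..k} \<times> {r. r permutes {..<k}})"
    then obtain i r where "i \<le> k" "r permutes {..<k}" "s = cyc i \<circ> sh r" by auto
    then show "s \<in> {s. s permutes {..<Suc k}}"
      using cyc_permutes sh_perm permutes_compose by blast
  next
    fix s assume "s \<in> {s. s permutes {..<Suc k}}"
    then have s: "s permutes {..<Suc k}" by simp
    define i where "i = s 0"
    have ik: "i \<le> k" using permutes_in_image[OF s, of 0] by (simp add: i_def)
    define t where "t = cycinv i \<circ> s"
    have cinv: "cycinv i = inv (cyc i)"
      by (metis cyc_cycinv inv_equality)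
    have "t permutes {..<Suc k}" unfolding t_def cinv
      by (intro permutes_compose s permutes_inv cyc_permutes ik)
    moreover have "t 0 = 0" by (simp add: t_def i_def cycinv_def)
    ultimately obtain r where r: "r permutes {..<k}" "t = sh r" using perm_fix0_sh by blast
    have "s = cyc i \<circ> t" by (auto simp: fun_eq_iff t_def cyc_cycinv)
    then show "s \<in> ?f ` ({..k} \<times> {r. r permutes {..<k}})" using r ik by auto
  qed
  finally show ?thesis ..
qed



definition rem :: "nat \<Rightarrow> (nat \<Rightarrow> 'a) \<Rightarrow> nat \<Rightarrow> 'a" where
  "rem i v = (\<lambda>m. if m < i then v m else v (Suc m))"
definition asym :: "nat \<Rightarrow> ('n::finite) sform \<Rightarrow> bool" where
  "asym k a \<longleftrightarrow> (\<forall>x v r. r permutes {..<k} \<longrightarrow> a x (\<lambda>i. v (r i)) = of_int (sign r) * a x v)"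

lemma sign_sq: "(of_int (sign r) :: real) * of_int (sign r) = 1"
  by (metis of_int_1 of_int_mult sign_idempotent)

lemma permutes_lt_permutation: "r permutes {..<(k::nat)} \<Longrightarrow> permutation r"
  using permutation_permutes by blast

lemma wedge1:
  assumes as: "asym k a" and t: "\<And>x v w. v 0 = w 0 \<Longrightarrow> t x v = t x w"
  shows "wedge 1 k t a x v = (\<Sum>i\<le>k. (-1)^i * t x (\<lambda>_. v i) * a x (rem i v))"
proof -
  let ?g = "\<lambda>\<sigma>. of_int (sign \<sigma>) * t x (\<lambda>i. v (\<sigma> i)) * a x (\<lambda>i. v (\<sigma> (i + 1)))"
  have step: "?g (cyc i \<circ> sh r) = (-1)^i * t x (\<lambda>_. v i) * a x (rem i v)"
    if r: "r permutes {..<k}" for i r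
  proof -
    have shr: "sh r permutes {..<Suc k}" "sign (sh r) = sign r" using sh_perm[OF r] by auto
    have "sign (cyc i \<circ> sh r) = sign (cyc i) * sign (sh r)"
      by (rule sign_compose) (auto simp: cyc_permutation permutes_lt_permutation[OF shr(1)])
    then have sg: "(of_int (sign (cyc i \<circ> sh r)) :: real) = (-1)^i * of_int (sign r)"
      using shr sign_cyc by simp
    have t1: "t x (\<lambda>s. v ((cyc i \<circ> sh r) s)) = t x (\<lambda>_. v i)" by (rule t) (simp add: sh_def cyc_def)
    have a1: "(\<lambda>s. v ((cyc i \<circ> sh r) (s + 1))) = (\<lambda>s. rem i v (r s))"
      by (auto simp: fun_eq_iff sh_def cyc_def rem_def)
    have a2: "a x (\<lambda>s. rem i v (r s)) = of_int (sign r) * a x (rem i v)"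
      using as r by (simp add: asym_def)
    have "?g (cyc i \<circ> sh r) = ((-1)^i * of_int (sign r)) * t x (\<lambda>_. v i) * (of_int (sign r) * a x (rem i v))"
      by (simp only: sg t1 a1 a2)
    also have "\<dots> = (-1)^i * t x (\<lambda>_. v i) * a x (rem i v) * (of_int (sign r) * of_int (sign r))"
      by (simp only: ac_simps)
    finally show ?thesis by (simp add: sign_sq)
  qed
  have card: "card {r. r permutes {..<k}} = fact k"
    by (rule card_permutations) auto
  have "wedge 1 k t a x v = 1 / (fact 1 * fact k) * sum ?g {\<sigma>. \<sigma> permutes {..<Suc k}}"
    by (simp add: wedge_def)
  also have "\<dots> = 1 / fact k * (\<Sum>i\<le>k. \<Sum>r\<in>{r. r permutes {..<k}}. ?g (cyc i \<circ> sh r))"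
    by (simp only: sum_perms_Suc) simp
  also have "\<dots> = 1 / fact k * (\<Sum>i\<le>k. \<Sum>r\<in>{r. r permutes {..<k}}. (-1)^i * t x (\<lambda>_. v i) * a x (rem i v))"
    using step by simp
  also have "\<dots> = (\<Sum>i\<le>k. (-1)^i * t x (\<lambda>_. v i) * a x (rem i v))"
    by (simp add: card sum_distrib_left)
  finally show ?thesis .
qed

lemma wedge0:
  assumes as: "asym l b" and a: "\<And>x v w. a x v = a x w"
  shows "wedge 0 l a b x v = a x v * b x v"
proof -
  have card: "card {r. r permutes {..<l}} = fact l"
    by (rule card_permutations) auto
  have "wedge 0 l a b x v = 1 / fact l * (\<Sum>\<sigma>\<in>{\<sigma>. \<sigma> permutes {..<l}}.
        of_int (sign \<sigma>) * a x (\<lambda>i. v (\<sigma> i)) * b x (\<lambda>i. v (\<sigma> i)))"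
    by (simp add: wedge_def)
  also have "\<dots> = 1 / fact l * (\<Sum>\<sigma>\<in>{\<sigma>. \<sigma> permutes {..<l}}. a x v * b x v)"
  proof -
    have "of_int (sign \<sigma>) * a x (\<lambda>i. v (\<sigma> i)) * b x (\<lambda>i. v (\<sigma> i)) = a x v * b x v"
      if "\<sigma> permutes {..<l}" for \<sigma>
    proof -
      have "b x (\<lambda>i. v (\<sigma> i)) = of_int (sign \<sigma>) * b x v" using as that by (simp add: asym_def)
      moreover have "a x (\<lambda>i. v (\<sigma> i)) = a x v" by (rule a)
      ultimately have "of_int (sign \<sigma>) * a x (\<lambda>i. v (\<sigma> i)) * b x (\<lambda>i. v (\<sigma> i))
         = a x v * b x v * (of_int (sign \<sigma>) * of_int (sign \<sigma>))" by (simp only: ac_simps)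
      then show ?thesis by (simp add: sign_sq)
    qed
    then show ?thesis by simp
  qed
  also have "\<dots> = a x v * b x v" by (simp add: card)
  finally show ?thesis .
qed

lemma wedge_asym: "asym (k + l) (wedge k l a b)"
  unfolding asym_def
proof (intro allI impI)
  fix x v r assume r: "r permutes {..<k + l}"
  let ?g = "\<lambda>w \<sigma>. of_int (sign \<sigma>) * a x (\<lambda>i. w (\<sigma> i)) * b x (\<lambda>i. w (\<sigma> (i + k)))"
  have pr: "permutation r" using permutes_lt_permutation[OF r] .
  have "sum (?g (\<lambda>i. v (r i))) {\<sigma>. \<sigma> permutes {..<k + l}}
      = sum (\<lambda>\<sigma>. of_int (sign r) * ?g v (r \<circ> \<sigma>)) {\<sigma>. \<sigma> permutes {..<k + l}}"
  proof (rule sum.cong)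
    fix \<sigma> assume "\<sigma> \<in> {\<sigma>. \<sigma> permutes {..<k + l}}"
    then have ps: "permutation \<sigma>" using permutes_lt_permutation by blast
    have "sign (r \<circ> \<sigma>) = sign r * sign \<sigma>" by (rule sign_compose[OF pr ps])
    then have "(of_int (sign r) :: real) * of_int (sign (r \<circ> \<sigma>)) = of_int (sign \<sigma>) * (of_int (sign r) * of_int (sign r))"
      by (simp add: ac_simps)
    then have "(of_int (sign r) :: real) * of_int (sign (r \<circ> \<sigma>)) = of_int (sign \<sigma>)"
      by (simp add: sign_sq)
    then show "?g (\<lambda>i. v (r i)) \<sigma> = of_int (sign r) * ?g v (r \<circ> \<sigma>)"
      by (simp add: ac_simps)
  qed simp
  also have "\<dots> = sum (\<lambda>\<sigma>. of_int (sign r) * ?g v \<sigma>) {\<sigma>. \<sigma> permutes {..<k + l}}"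
    using setum_permutations_compose_left[OF r, of "\<lambda>\<sigma>. of_int (sign r) * ?g v \<sigma>"] by simp
  also have "\<dots> = of_int (sign r) * sum (?g v) {\<sigma>. \<sigma> permutes {..<k + l}}"
    by (simp add: sum_distrib_left)
  finally show "wedge k l a b x (\<lambda>i. v (r i)) = of_int (sign r) * wedge k l a b x v"
    by (simp add: wedge_def)
qed

lemma asym_sum: "finite S \<Longrightarrow> (\<And>j. j \<in> S \<Longrightarrow> asym k (f j)) \<Longrightarrow> asym k (\<lambda>x v. \<Sum>j\<in>S. f j x v)"
  by (simp add: asym_def sum_distrib_left)



lemma vvformD:
  assumes "K \<in> vvform k"
  shows "\<And>x v w. (\<forall>i<k. v i = w i) \<Longrightarrow> K x v = K x w"
    "\<And>x v i. i < k \<Longrightarrow> linear (\<lambda>u. K x (v(i := u)))"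
    "\<And>x v i j. i < k \<Longrightarrow> j < k \<Longrightarrow> i \<noteq> j \<Longrightarrow> v i = v j \<Longrightarrow> K x v = 0"
    "\<And>v j. smooth_fun (\<lambda>x. K x v $ j)"
  using assms unfolding vvform_def by blast+

lemma smooth_diff: "smooth_fun f \<Longrightarrow> f differentiable (at x)"
  by (erule smooth_fun.cases) auto

lemma fd_cmult:
  fixes f :: "'a::real_normed_vector \<Rightarrow> real"
  assumes "f differentiable (at x)"
  shows "frechet_derivative (\<lambda>y. c * f y) (at x) = (\<lambda>h. c * frechet_derivative f (at x) h)"
proof -
  have d: "(f has_derivative frechet_derivative f (at x)) (at x)" using assms frechet_derivative_works by blast
  have "((\<lambda>y. c * f y) has_derivative (\<lambda>h. c * frechet_derivative f (at x) h)) (at x)"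
    using has_derivative_mult_right[OF d, of c] by simp
  then show ?thesis by (rule frechet_derivative_at[symmetric])
qed

lemma fd_neg:
  assumes "f differentiable (at x)"
  shows "frechet_derivative (\<lambda>y. - f y) (at x) = (\<lambda>h. - frechet_derivative f (at x) h)"
proof -
  have "(f has_derivative frechet_derivative f (at x)) (at x)" using assms frechet_derivative_works by blast
  then have "((\<lambda>y. - f y) has_derivative (\<lambda>h. - frechet_derivative f (at x) h)) (at x)"
    by (rule has_derivative_minus)
  then show ?thesis by (rule frechet_derivative_at[symmetric])
qed

lemma vv_swap:
  assumes K: "K \<in> vvform k" and ab: "a < k" "b < k" "a \<noteq> b"
  shows "K x (\<lambda>i. v (Transposition.transpose a b i)) = - K x v"
proof -
  define f where "f p q = K x (v(a := p, b := q))" for p q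
  have l1: "linear (\<lambda>u. f u q)" for q
  proof -
    have "linear (\<lambda>u. K x ((v(b := q))(a := u)))" using vvformD(2)[OF K, of a] ab(1) by blast
    moreover have "(v(b := q))(a := u) = v(a := u, b := q)" for u using ab(3) by (simp add: fun_upd_twist)
    ultimately show ?thesis by (simp add: f_def)
  qed
  have l2: "linear (\<lambda>u. f p u)" for p
    unfolding f_def using vvformD(2)[OF K, of b _ "v(a:=p)"] ab(2) by simp
  have z: "f p p = 0" for p unfolding f_def by (rule vvformD(3)[OF K, of a b]) (use ab in auto)
  have "0 = f (v a + v b) (v a + v b)" using z by simp
  also have "\<dots> = f (v a) (v a) + f (v a) (v b) + (f (v b) (v a) + f (v b) (v b))"
    by (simp add: linear_add[OF l1] linear_add[OF l2])
  finally have "f (v a) (v b) + f (v b) (v a) = 0" by (simp add: z)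
  then have e: "f (v a) (v b) = - f (v b) (v a)" by (simp add: eq_neg_iff_add_eq_0)
  have "f (v a) (v b) = K x v" by (simp add: f_def)
  moreover have "f (v b) (v a) = K x (\<lambda>i. v (Transposition.transpose a b i))"
    unfolding f_def by (rule arg_cong[where f="K x"]) (auto simp: fun_eq_iff Transposition.transpose_def)
  ultimately show ?thesis using e by (metis minus_minus)
qed

lemma vv_asym_vec:
  assumes K: "K \<in> vvform k" and r: "r permutes {..<k}"
  shows "K x (\<lambda>i. v (r i)) = of_int (sign r) *\<^sub>R K x v"
  using r finite_lessThan[of k]
proof (induction arbitrary: v rule: permutes_induct)
  case id then show ?case by simp
next
  case (swap a b p)
  have pp: "permutation p" using swap permutes_lt_permutation by blast
  have sg: "sign (Transposition.transpose a b \<circ> p) = - sign p"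
    using sign_compose[OF permutation_swap_id pp, of a b] swap.hyps(3) by (simp add: sign_swap_id)
  have "K x (\<lambda>i. v ((Transposition.transpose a b \<circ> p) i)) = K x (\<lambda>i. (\<lambda>j. v (Transposition.transpose a b j)) (p i))"
    by simp
  also have "\<dots> = of_int (sign p) *\<^sub>R K x (\<lambda>j. v (Transposition.transpose a b j))" by (rule swap.IH)
  also have "\<dots> = of_int (sign p) *\<^sub>R (- K x v)" using vv_swap[OF K] swap.hyps by simp
  also have "\<dots> = of_int (sign (Transposition.transpose a b \<circ> p)) *\<^sub>R K x v" using sg by simp
  finally show ?case .
qed

definition dgood :: "nat \<Rightarrow> ('n::finite) sform \<Rightarrow> bool" where
  "dgood k a \<longleftrightarrow> asym k a \<and> (\<forall>v x. (\<lambda>y. a y v) differentiable (at x))"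

lemma vv_dgood: "K \<in> vvform k \<Longrightarrow> dgood k (comp K m)"
  unfolding dgood_def asym_def comp_def
  using vv_asym_vec[of K k] smooth_diff[OF vvformD(4)[of K k]] by simp

lemma lie_asym: assumes "dgood k a" shows "asym k (lie j a)"
  unfolding asym_def
proof (intro allI impI)
  fix x v r assume r: "r permutes {..<k}"
  have "(\<lambda>y. a y (\<lambda>i. v (r i))) = (\<lambda>y. of_int (sign r) * a y v)"
    using assms r by (simp add: dgood_def asym_def)
  then show "lie j a x (\<lambda>i. v (r i)) = of_int (sign r) * lie j a x v"
    using assms by (simp add: lie_def fd_cmult dgood_def)
qed

lemma dR_expand:
  assumes "dgood k a"
  shows "dR k a x v = (\<Sum>i\<le>k. (-1)^i * (\<Sum>j\<in>UNIV. v i $ j * lie j a x (rem i v)))"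
proof -
  have "frechet_derivative (\<lambda>y. a y (rem i v)) (at x) (v i) = (\<Sum>j\<in>UNIV. v i $ j * lie j a x (rem i v))" for i
  proof -
    have lin: "linear (frechet_derivative (\<lambda>y. a y (rem i v)) (at x))"
      using assms by (intro linear_frechet_derivative) (simp add: dgood_def)
    have "v i = (\<Sum>j\<in>UNIV. (v i $ j) *\<^sub>R axis j 1)"
      using basis_expansion[of "v i"] by (simp add: scalar_mult_eq_scaleR)
    then have "frechet_derivative (\<lambda>y. a y (rem i v)) (at x) (v i)
       = frechet_derivative (\<lambda>y. a y (rem i v)) (at x) (\<Sum>j\<in>UNIV. (v i $ j) *\<^sub>R axis j 1)" by simp
    also have "\<dots> = (\<Sum>j\<in>UNIV. v i $ j * lie j a x (rem i v))"
      by (simp add: linear_sum[OF lin] linear_scale[OF lin] lie_def)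
    finally show ?thesis .
  qed
  then show ?thesis by (simp add: dR_def rem_def)
qed

lemma dR_wedge:
  assumes "dgood k a"
  shows "dR k a = (\<lambda>x v. \<Sum>j\<in>UNIV. wedge 1 k (\<lambda>x v. v 0 $ j) (lie j a) x v)"
proof (intro ext)
  fix x v
  have "wedge 1 k (\<lambda>x v. v 0 $ j) (lie j a) x v = (\<Sum>i\<le>k. (-1)^i * v i $ j * lie j a x (rem i v))" for j
    by (rule wedge1[OF lie_asym[OF assms]]) simp
  then have "(\<Sum>j\<in>UNIV. wedge 1 k (\<lambda>x v. v 0 $ j) (lie j a) x v)
     = (\<Sum>j\<in>UNIV. \<Sum>i\<le>k. (-1)^i * v i $ j * lie j a x (rem i v))" by simp
  also have "\<dots> = (\<Sum>i\<le>k. (-1)^i * (\<Sum>j\<in>UNIV. v i $ j * lie j a x (rem i v)))"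
    by (subst sum.swap) (simp add: sum_distrib_left mult.assoc)
  finally show "dR k a x v = (\<Sum>j\<in>UNIV. wedge 1 k (\<lambda>x v. v 0 $ j) (lie j a) x v)"
    using dR_expand[OF assms] by simp
qed

lemma dR_asym: assumes "dgood k a" shows "asym (Suc k) (dR k a)"
  unfolding dR_wedge[OF assms]
  by (rule asym_sum) (use wedge_asym[of 1 k] in auto)



lemma compP: "comp Pdiag j = (\<lambda>x v. x $ j * v 0 $ j)"
  by (simp add: comp_def Pdiag_def)

lemma fd_coord:
  "frechet_derivative (\<lambda>y. y $ j * c) (at x) = (\<lambda>h. h $ j * (c::real))"
proof -
  have "((\<lambda>y. y $ j * c) has_derivative (\<lambda>h. h $ j * c)) (at x)"
    by (intro derivative_intros bounded_linear_imp_has_derivative bounded_linear_vec_nth)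
  then show ?thesis by (rule frechet_derivative_at[symmetric])
qed

lemma lieP: "lie m (comp Pdiag j) = (\<lambda>x v. axis m 1 $ j * v 0 $ j)"
  by (simp add: lie_def compP fd_coord)

lemma dRP: "dR 1 (comp Pdiag j) = (\<lambda>x v. 0)"
  by (simp add: dR_def compP fd_coord)

lemma contrP: "contr 1 m (comp Pdiag j) = (\<lambda>x v. x $ j * axis m 1 $ j)"
  by (simp add: contr_def compP)

lemma wedge_zero: "wedge k l (\<lambda>x v. 0) b = (\<lambda>x v. 0)"
  by (simp add: wedge_def fun_eq_iff)

lemma sum_sum_delta: "(\<Sum>x\<in>(UNIV::'a::finite set). \<Sum>y\<in>(UNIV::'b::finite set). if t = x then f x y else (0::real)) = (\<Sum>y\<in>UNIV. f t y)"
  by (subst sum.swap) (simp add: sum.delta)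

lemma sum_single_nz: "(\<And>m. m \<noteq> t \<Longrightarrow> f m = (0::real)) \<Longrightarrow> (\<Sum>m\<in>(UNIV::'a::finite set). f m) = f t"
  by (subst sum.remove[of _ t]) (auto intro: sum.neutral)

lemma FN_formula:
  assumes K: "K \<in> vvform k"
  shows "FN 1 k Pdiag K x v $ t = (\<Sum>i\<le>k. (-1)^i * ((\<Sum>j\<in>UNIV. (x$j - x$t) * v i $ j * lie j (comp K t) x (rem i v))
            - v i $ t * comp K t x (rem i v)))"
proof -
  have g: "dgood k (comp K m)" for m by (rule vv_dgood[OF K])
  define A where "A j m = (\<Sum>i\<le>k. (-1)^i * (x$j * v i $ j) * lie j (comp K m) x (rem i v))" for j m
  define B where "B j m = (\<Sum>i\<le>k. (-1)^i * (axis m 1 $ j * v i $ j) * comp K m x (rem i v))" for j m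
  define E where "E j m = x $ j * axis m 1 $ j * dR k (comp K m) x v" for j m
  have T1: "wedge 1 k (comp Pdiag j) (lie j (comp K m)) x v = A j m" for j m
    unfolding A_def using wedge1[OF lie_asym[OF g], of "comp Pdiag j"] by (simp add: compP)
  have T2: "wedge 1 k (lie m (comp Pdiag j)) (comp K m) x v = B j m" for j m
    unfolding B_def using wedge1[OF conjunct1[OF g[unfolded dgood_def]], of "lie m (comp Pdiag j)"] by (simp add: lieP)
  have T4: "wedge 0 (Suc k) (contr 1 m (comp Pdiag j)) (dR k (comp K m)) x v = E j m" for j m
  proof -
    have "wedge 0 (Suc k) (contr 1 m (comp Pdiag j)) (dR k (comp K m)) x v = contr 1 m (comp Pdiag j) x v * dR k (comp K m) x v"
      by (rule wedge0[OF dR_asym[OF g[of m]]]) (simp add: contr_def compP)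
    then show ?thesis by (simp add: E_def contr_def compP)
  qed
  have "FN 1 k Pdiag K x v = (\<Sum>j\<in>UNIV. \<Sum>m\<in>UNIV. A j m *\<^sub>R axis m 1 - B j m *\<^sub>R axis j 1 - E j m *\<^sub>R axis j 1)"
    unfolding FN_def by (simp only: T1 T2 T4[unfolded Suc_eq_plus1] dRP wedge_zero) (simp add: T4[simplified])
  have Bz: "m \<noteq> t \<Longrightarrow> B t m = 0" for m by (simp add: B_def axis_def)
  have Ez: "m \<noteq> t \<Longrightarrow> E t m = 0" for m by (simp add: E_def axis_def)
  have BB: "(\<Sum>m\<in>UNIV. B t m) = B t t" by (rule sum_single_nz) (use Bz in auto)
  have EE: "(\<Sum>m\<in>UNIV. E t m) = E t t" by (rule sum_single_nz) (use Ez in auto)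
  then have "FN 1 k Pdiag K x v $ t = (\<Sum>j\<in>UNIV. A j t) - B t t - E t t"
    using BB EE sum_sum_delta[of t B] sum_sum_delta[of t E] \<open>FN 1 k Pdiag K x v = _\<close>
    by (simp add: sum_component axis_def sum_subtractf if_distrib sum.delta sum.delta' cong: if_cong)
  let ?L = "\<lambda>j i. lie j (comp K t) x (rem i v)"
  have SA: "(\<Sum>j\<in>UNIV. A j t) = (\<Sum>i\<le>k. \<Sum>j\<in>UNIV. (-1)^i * (x$j * v i $ j) * ?L j i)"
    unfolding A_def by (rule sum.swap)
  have SE: "E t t = (\<Sum>i\<le>k. x$t * ((-1)^i * (\<Sum>j\<in>UNIV. v i $ j * ?L j i)))"
    unfolding E_def dR_expand[OF g] by (simp add: sum_distrib_left)
  have SB: "B t t = (\<Sum>i\<le>k. (-1)^i * (v i $ t) * comp K t x (rem i v))"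
    unfolding B_def by simp
  have per: "(-1)^i * ((\<Sum>j\<in>UNIV. (x$j - x$t) * v i $ j * ?L j i) - v i $ t * comp K t x (rem i v))
     = (\<Sum>j\<in>UNIV. (-1)^i * (x$j * v i $ j) * ?L j i) - (-1)^i * (v i $ t) * comp K t x (rem i v)
       - x$t * ((-1)^i * (\<Sum>j\<in>UNIV. v i $ j * ?L j i))" for i
  proof -
    have f1: "(\<Sum>j\<in>UNIV. (x$j - x$t) * v i $ j * ?L j i) = (\<Sum>j\<in>UNIV. x$j * v i $ j * ?L j i) - x$t * (\<Sum>j\<in>UNIV. v i $ j * ?L j i)"
      by (simp add: left_diff_distrib sum_subtractf sum_distrib_left mult.assoc)
    have f2: "(\<Sum>j\<in>UNIV. (-1)^i * (x$j * v i $ j) * ?L j i) = (-1)^i * (\<Sum>j\<in>UNIV. x$j * v i $ j * ?L j i)"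
      by (simp add: sum_distrib_left mult.assoc)
    show ?thesis unfolding f1 f2 by (simp add: algebra_simps)
  qed
  show ?thesis
    unfolding \<open>FN 1 k Pdiag K x v $ t = _\<close> SA SE SB per
    by (simp add: sum_subtractf)
qed



lemma smooth_lin: "smooth_fun (\<lambda>x::real^'n::finite. x $ j * c + d)"
proof (rule smooth_fun.coinduct[where X="\<lambda>f. \<exists>j c d. f = (\<lambda>x::real^'n. x $ j * c + d)"])
  show "\<exists>j' c' d'. (\<lambda>x::real^'n. x $ j * c + d) = (\<lambda>x. x $ j' * c' + d')" by blast
next
  fix f :: "real^'n \<Rightarrow> real" assume "\<exists>j c d. f = (\<lambda>x. x $ j * c + d)"
  then obtain j c d where f: "f = (\<lambda>x::real^'n. x $ j * c + d)" by blast
  have hd: "(f has_derivative (\<lambda>h. h $ j * c)) (at x)" for x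
    unfolding f by (rule has_derivative_add_const[OF has_derivative_mult_left[OF bounded_linear_imp_has_derivative[OF bounded_linear_vec_nth]]])
  have fd: "frechet_derivative f (at x) = (\<lambda>h. h $ j * c)" for x
    using hd frechet_derivative_at by metis
  have "\<forall>x. f differentiable (at x)" using hd differentiableI by blast
  moreover have "(\<lambda>x. frechet_derivative f (at x) (axis i 1)) = (\<lambda>x. x $ j * 0 + axis i 1 $ j * c)" for i
    by (simp add: fd)
  ultimately show "\<exists>g. f = g \<and> (\<forall>x. g differentiable at x) \<and>
      (\<forall>i. (\<exists>j c d. (\<lambda>x. frechet_derivative g (at x) (axis i 1)) = (\<lambda>x. x $ j * c + d)) \<or>
           smooth_fun (\<lambda>x. frechet_derivative g (at x) (axis i 1)))" by blast
qed

lemma smooth_neg: assumes "smooth_fun f" shows "smooth_fun (\<lambda>x. - f x)"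
proof (rule smooth_fun.coinduct[where X="\<lambda>h. \<exists>g. smooth_fun g \<and> h = (\<lambda>x. - g x)"])
  show "\<exists>g. smooth_fun g \<and> (\<lambda>x. - f x) = (\<lambda>x. - g x)" using assms by blast
next
  fix h assume "\<exists>g. smooth_fun g \<and> h = (\<lambda>x. - g x)"
  then obtain g where g: "smooth_fun g" "h = (\<lambda>x. - g x)" by blast
  have dg: "\<forall>x. g differentiable (at x)" "\<forall>j. smooth_fun (\<lambda>x. frechet_derivative g (at x) (axis j 1))"
    using g(1) by (auto elim: smooth_fun.cases)
  have "\<forall>x. h differentiable (at x)" unfolding g(2) using dg(1) by (auto intro: differentiable_minus)
  moreover have "(\<lambda>x. frechet_derivative h (at x) (axis j 1)) = (\<lambda>x. - frechet_derivative g (at x) (axis j 1))" for j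
    unfolding g(2) using dg(1) by (simp add: fd_neg)
  ultimately show "\<exists>f. h = f \<and> (\<forall>x. f differentiable at x) \<and>
      (\<forall>j. (\<exists>g. smooth_fun g \<and> (\<lambda>x. frechet_derivative f (at x) (axis j 1)) = (\<lambda>x. - g x)) \<or>
           smooth_fun (\<lambda>x. frechet_derivative f (at x) (axis j 1)))" using dg(2) by blast
qed

lemma P_vv: "(Pdiag :: 'n::finite vform) \<in> vvform 1"
  unfolding vvform_def
proof (intro CollectI conjI allI impI)
  fix x v i assume "i < (1::nat)"
  then have i: "i = 0" by simp
  show "linear (\<lambda>u. Pdiag x (v(i := u)))"
    unfolding i by (rule linearI) (simp_all add: Pdiag_def vec_eq_iff algebra_simps)
next
  fix v :: "nat \<Rightarrow> real^'n" and j :: 'n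
  have "smooth_fun (\<lambda>x::real^'n. x $ j * v 0 $ j + 0)" by (rule smooth_lin)
  then show "smooth_fun (\<lambda>x. Pdiag x v $ j)" by (simp add: Pdiag_def)
qed (auto simp: Pdiag_def)

lemma P_nij: "FN 1 1 (Pdiag :: 'n::finite vform) Pdiag = (\<lambda>x v. 0)"
proof (intro ext)
  fix x :: "real^'n" and v
  show "FN 1 1 Pdiag Pdiag x v = 0"
  proof (subst vec_eq_iff, intro allI)
    fix t
    have z: "(x$j - x$t) * a * (axis j 1 $ t * b) = 0" for j a b by (auto simp: axis_def)
    show "FN 1 1 Pdiag Pdiag x v $ t = 0 $ t"
      by (subst FN_formula[OF P_vv]) (simp only: lieP, simp add: compP rem_def z)
  qed
qed

definition cns :: "'n::finite \<Rightarrow> (nat \<Rightarrow> real^'n) \<Rightarrow> nat \<Rightarrow> real^'n" where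
  "cns t v = (\<lambda>s. if s = 0 then axis t 1 else v (s - 1))"

lemma cns_simps: "cns t v 0 = axis t 1" "cns t v (Suc i) = v i"
  "rem 0 (cns t v) = v" "rem (Suc i) (cns t v) = cns t (rem i v)"
  by (auto simp: cns_def rem_def fun_eq_iff)

lemma zero_sum: "(\<Sum>j\<in>UNIV. (x$j - x$t) * axis t 1 $ j * f j) = (0::real)"
  by (rule sum.neutral) (auto simp: axis_def)

lemma zero_sum': "(\<Sum>j\<in>UNIV. (x$j - x$t) * (if j = t then 1 else 0) * f j) = (0::real)"
  by (rule sum.neutral) auto



lemma L_vv:
  fixes K :: "'n::finite vform"
  assumes K: "K \<in> vvform (Suc k)"
  shows "(\<lambda>x v. \<chi> t. - K x (cns t v) $ t) \<in> vvform k"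
  unfolding vvform_def
proof (intro CollectI conjI allI impI)
  fix x :: "real^'n" and v w :: "nat \<Rightarrow> real^'n" assume h: "\<forall>i<k. v i = (w i :: real^'n)"
  have "K x (cns t v) = K x (cns t w)" for t
    by (rule vvformD(1)[OF K]) (use h in \<open>auto simp: cns_def\<close>)
  then show "(\<chi> t. - K x (cns t v) $ t) = (\<chi> t. - K x (cns t w) $ t)" by simp
next
  fix x :: "real^'n" and v :: "nat \<Rightarrow> real^'n" and i assume i: "i < k"
  have e: "cns t (v(i := u)) = (cns t v)(Suc i := u)" for t u
    by (auto simp: cns_def fun_eq_iff)
  have lin: "linear (\<lambda>u. K x ((cns t v)(Suc i := u)))" for t :: 'n
    by (rule vvformD(2)[OF K]) (use i in simp)
  show "linear (\<lambda>u. \<chi> t. - K x (cns t (v(i := u))) $ t)"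
    unfolding e
    by (rule linearI) (simp_all add: vec_eq_iff linear_add[OF lin] linear_scale[OF lin])
next
  fix x :: "real^'n" and v :: "nat \<Rightarrow> real^'n" and i j assume h: "i < k \<and> j < k \<and> i \<noteq> j \<and> v i = (v j :: real^'n)"
  have "K x (cns t v) = 0" for t
    by (rule vvformD(3)[OF K, of "Suc i" "Suc j"]) (use h in \<open>auto simp: cns_def\<close>)
  then show "(\<chi> t. - K x (cns t v) $ t) = 0" by (simp add: vec_eq_iff)
next
  fix v :: "nat \<Rightarrow> real^'n" and j :: 'n
  show "smooth_fun (\<lambda>x. (\<chi> t. - K x (cns t v) $ t) $ j)"
    using smooth_neg[OF vvformD(4)[OF K, of "cns j v" j]] by simp
qed

theorem proposition16p1:
  shows "Pdiag \<in> (vvform 1 :: 'n::finite vform set)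
    \<and> FN 1 1 (Pdiag :: 'n vform) Pdiag = (\<lambda>x v. 0)
    \<and> (\<forall>k. \<forall>K \<in> (vvform k :: 'n vform set). FN 1 k Pdiag K = (\<lambda>x v. 0) \<longrightarrow>
          (if k = 0 then K = (\<lambda>x v. 0)
           else (\<exists>L \<in> vvform (k - 1). FN 1 (k - 1) Pdiag L = K)))"
proof (intro conjI allI ballI impI)
  show "Pdiag \<in> (vvform 1 :: 'n::finite vform set)" by (rule P_vv)
  show "FN 1 1 (Pdiag :: 'n vform) Pdiag = (\<lambda>x v. 0)" by (rule P_nij)
  fix k and K :: "'n vform" assume K: "K \<in> vvform k" and cl: "FN 1 k Pdiag K = (\<lambda>x v. 0)"
  show "if k = 0 then K = (\<lambda>x v. 0) else (\<exists>L \<in> vvform (k - 1). FN 1 (k - 1) Pdiag L = K)"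
  proof (cases k)
    case 0
    have "K = (\<lambda>x v. 0)"
    proof (intro ext)
      fix x w
      show "K x w = 0"
      proof (subst vec_eq_iff, intro allI)
        fix t
        let ?v = "\<lambda>_::nat. axis t 1 :: real^'n"
        have "FN 1 k Pdiag K x ?v $ t = 0" using cl by simp
        then have "comp K t x (rem 0 ?v) = 0"
          using FN_formula[OF K, of x ?v t] 0 by (simp add: zero_sum zero_sum')
        moreover have "K x w = K x (rem 0 ?v)" by (rule vvformD(1)[OF K]) (simp add: 0)
        ultimately show "K x w $ t = 0 $ t" by (simp add: comp_def)
      qed
    qed
    then show ?thesis using 0 by simp
  next
    case (Suc k')
    define L where "L = (\<lambda>x v. \<chi> t. - K x (cns t v) $ t)"
    have K': "K \<in> vvform (Suc k')" using K Suc by simp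
    have Lv: "L \<in> vvform k'" unfolding L_def by (rule L_vv[OF K'])
    have compL: "comp L t x w = - comp K t x (cns t w)" for t x w
      by (simp add: L_def comp_def)
    have lieL: "lie j (comp L t) x w = - lie j (comp K t) x (cns t w)" for j t x w
    proof -
      have "comp L t = (\<lambda>y w. - comp K t y (cns t w))" using compL by (simp add: fun_eq_iff)
      moreover have "(\<lambda>y. comp K t y (cns t w)) differentiable (at x)"
        using smooth_diff[OF vvformD(4)[OF K]] by (simp add: comp_def)
      ultimately show ?thesis by (simp add: lie_def fd_neg)
    qed
    have "FN 1 k' Pdiag L = K"
    proof (intro ext)
      fix x v
      show "FN 1 k' Pdiag L x v = K x v"
      proof (subst vec_eq_iff, intro allI)
        fix t
        define G where "G i = (\<Sum>j\<in>UNIV. (x$j - x$t) * v i $ j * lie j (comp K t) x (cns t (rem i v)))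
            - v i $ t * comp K t x (cns t (rem i v))" for i
        have "0 = FN 1 k Pdiag K x (cns t v) $ t" using cl by simp
        also have "\<dots> = (\<Sum>i\<le>Suc k'. (-1)^i * ((\<Sum>j\<in>UNIV. (x$j - x$t) * cns t v i $ j * lie j (comp K t) x (rem i (cns t v)))
            - cns t v i $ t * comp K t x (rem i (cns t v))))"
          using FN_formula[OF K] Suc by simp
        also have "\<dots> = - comp K t x v + (\<Sum>i\<le>k'. (-1)^(Suc i) * G i)"
          by (subst sum.atMost_Suc_shift) (simp add: cns_simps zero_sum G_def)
        finally have e: "comp K t x v = - (\<Sum>i\<le>k'. (-1)^i * G i)"
          by (simp add: sum_negf)
        have "FN 1 k' Pdiag L x v $ t = (\<Sum>i\<le>k'. (-1)^i * - G i)"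
          unfolding FN_formula[OF Lv] compL lieL G_def
          by (simp add: sum_negf)
        also have "\<dots> = comp K t x v" using e by (simp add: sum_negf)
        finally show "FN 1 k' Pdiag L x v $ t = K x v $ t" by (simp add: comp_def)
      qed
    qed
    then show ?thesis using Lv Suc by auto
  qed
qed

end
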